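(* In the Com-IC model, for any fixed $\mathcal{B}$-seed set $S_\mathcal{B}$, the function $S_\mathcal{A}\mapsto\sigma_\mathcal{A}(S_\mathcal{A},S_\mathcal{B})$ is monotonically non-decreasing for every GAP vector in $\mathbf{Q}^+\cup\mathbf{Q}^-$. Moreover, for any fixed $\mathcal{A}$-seed set $S_\mathcal{A}$, the function $S_\mathcal{B}\mapsto\sigma_\mathcal{A}(S_\mathcal{A},S_\mathcal{B})$ is monotonically non-decreasing for every GAP vector in $\mathbf{Q}^+$ and monotonically non-increasing for every GAP vector in $\mathbf{Q}^-$.
   Context: Com-IC model. Let $G=(V,E,p)$ be a directed graph with $p:E\to[0,1]$, write $p_{u,v}=p(u,v)$, and $N^-(v)$ for the in-neighbours of $v$. Two items $\mathcal{A},\mathcal{B}$; GAPs $\mathbf{Q}=(q_{\mathcal{A}|\emptyset},q_{\mathcal{A}|\mathcal{B}},q_{\mathcal{B}|\emptyset},q_{\mathcal{B}|\mathcal{A}})\in[0,1]^4$. Given seed sets $S_\mathcal{A},S_\mathcal{B}\subseteq V$, randomness: each edge $(u,v)$ independently live w.p. $p_{u,v}$; each node $v$ independently draws $\alpha^v_\mathcal{A},\alpha^v_\mathcal{B}$ uniform on $[0,1]$, a uniformly random permutation $\pi_v$ of $N^-(v)$, and a fair coin $\tau_v\in\{\mathcal{A},\mathcal{B}\}$. For each item $X$ each node is $X$-idle, $X$-suspended, $X$-adopted or $X$-rejected; initially all idle. At step $0$ nodes of $S_\mathcal{A}$ become $\mathcal{A}$-adopted and nodes of $S_\mathcal{B}$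 become $\mathcal{B}$-adopted (order for nodes in both given by $\tau_v$). At step $t\ge1$, $v$ is informed of $X$ by in-neighbour $u$ if $(u,v)$ is live and $u$ adopted $X$ at step $t-1$; informing in-neighbours are processed in order $\pi_v$ (an in-neighbour that adopted both items is processed for both, in its adoption order). When $v$ is informed of $X$ ($Y$ the other item) while $X$-idle: if $Y$-adopted, $v$ becomes $X$-adopted if $\alpha^v_X\le q_{X|Y}$, else $X$-rejected; otherwise $X$-adopted if $\alpha^v_X\le q_{X|\emptyset}$, else $X$-suspended. Informing a non-$X$-idle node of $X$ has no effect. Reconsideration: when an $X$-suspended node becomes $Y$-adopted, it becomes $X$-adopted if $\alpha^v_X\le q_{X|Y}$, else $X$-rejected. The process stops when nothing changes. $\sigma_\mathcal{A}(S_\mathcal{A},S_\mathcal{B})$ is the expected final number of $\mathcal{A}$-adopted nodes. $\mathbf{Q}^+$: $q_{\mathcal{A}|\emptyset}\le q_{\mathcal{A}|\mathcal{B}}$ and $q_{\mathcal{B}|\emptyset}\le q_{\mathcal{B}|\mathcal{A}}$. $\mathbf{Q}^-$: $q_{\mathcal{A}|\emptyset}\ge q_{\mathcal{A}|\mathcal{B}}$ and $q_{\mathcal{B}|\emptyset}\ge q_{\mathcal{B}|\mathcal{A}}$. *)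

theory Defs
  imports "HOL-Probability.Probability"
begin

datatype item = IA | IB

fun other :: "item \<Rightarrow> item" where
  "other IA = IB"
| "other IB = IA"

datatype status = Idle | Suspended | Adopted | Rejected

text \<open>GAP vector Q = (q_{A|0}, q_{A|B}, q_{B|0}, q_{B|A}).\<close>
type_synonym gap = "real \<times> real \<times> real \<times> real"

fun q_empty :: "gap \<Rightarrow> item \<Rightarrow> real" where
  "q_empty (a, _, _, _) IA = a"
| "q_empty (_, _, b, _) IB = b"

fun q_cond :: "gap \<Rightarrow> item \<Rightarrow> real" where
  "q_cond (_, a, _, _) IA = a"
| "q_cond (_, _, _, b) IB = b"

definition gap_valid :: "gap \<Rightarrow> bool" where
  "gap_valid Q \<longleftrightarrow> (\<forall>X. 0 \<le> q_empty Q X \<and> q_empty Q X \<le> 1 \<and> 0 \<le> q_cond Q X \<and> q_cond Q X \<le> 1)"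

definition gap_Qplus :: "gap \<Rightarrow> bool" where
  "gap_Qplus Q \<longleftrightarrow> q_empty Q IA \<le> q_cond Q IA \<and> q_empty Q IB \<le> q_cond Q IB"

definition gap_Qminus :: "gap \<Rightarrow> bool" where
  "gap_Qminus Q \<longleftrightarrow> q_empty Q IA \<ge> q_cond Q IA \<and> q_empty Q IB \<ge> q_cond Q IB"

text \<open>Local state of a node: its status for each item, together with the list
  (in adoption order) of items it adopted during the current/last step.\<close>
type_synonym local_state = "(item \<Rightarrow> status) \<times> item list"

definition informed :: "gap \<Rightarrow> (item \<Rightarrow> real) \<Rightarrow> item \<Rightarrow> local_state \<Rightarrow> local_state" where
  "informed Q a X = (\<lambda>(s, new). let Y = other X in
     if s X \<noteq> Idle then (s, new)
     else if s Y = Adopted then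
       (if a X \<le> q_cond Q X then (s(X := Adopted), new @ [X]) else (s(X := Rejected), new))
     else if a X \<le> q_empty Q X then
       (if s Y = Suspended then
          (if a Y \<le> q_cond Q Y then (s(X := Adopted, Y := Adopted), new @ [X, Y])
           else (s(X := Adopted, Y := Rejected), new @ [X]))
        else (s(X := Adopted), new @ [X]))
     else (s(X := Suspended), new))"

definition seed_state :: "'v set \<Rightarrow> 'v set \<Rightarrow> ('v \<Rightarrow> item) \<Rightarrow> 'v \<Rightarrow> local_state" where
  "seed_state SA SB tau = (\<lambda>v.
     ((\<lambda>X. if (X = IA \<and> v \<in> SA) \<or> (X = IB \<and> v \<in> SB) then Adopted else Idle),
      (if v \<in> SA \<and> v \<in> SB then (if tau v = IA then [IA, IB] else [IB, IA])
       else if v \<in> SA then [IA] else if v \<in> SB then [IB] else [])))"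

definition comic_step :: "gap \<Rightarrow> ('v \<times> 'v) set \<Rightarrow> ('v \<Rightarrow> 'v list) \<Rightarrow> ('v \<Rightarrow> item \<Rightarrow> real)
    \<Rightarrow> ('v \<Rightarrow> local_state) \<Rightarrow> ('v \<Rightarrow> local_state)" where
  "comic_step Q L perm alpha st = (\<lambda>v.
     fold (informed Q (alpha v))
          (concat (map (\<lambda>u. if (u, v) \<in> L then snd (st u) else []) (perm v)))
          (fst (st v), []))"

fun comic_run :: "gap \<Rightarrow> 'v set \<Rightarrow> 'v set \<Rightarrow> ('v \<times> 'v) set \<Rightarrow> ('v \<Rightarrow> 'v list) \<Rightarrow> ('v \<Rightarrow> item)
    \<Rightarrow> ('v \<Rightarrow> item \<Rightarrow> real) \<Rightarrow> nat \<Rightarrow> ('v \<Rightarrow> local_state)" where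
  "comic_run Q SA SB L perm tau alpha 0 = seed_state SA SB tau"
| "comic_run Q SA SB L perm tau alpha (Suc t) = comic_step Q L perm alpha (comic_run Q SA SB L perm tau alpha t)"

text \<open>Adoption is permanent, so the final set of X-adopted nodes is the set of nodes
  that are X-adopted at some step.\<close>
definition adopted_final :: "gap \<Rightarrow> 'v set \<Rightarrow> 'v set \<Rightarrow> ('v \<times> 'v) set \<Rightarrow> ('v \<Rightarrow> 'v list)
    \<Rightarrow> ('v \<Rightarrow> item) \<Rightarrow> ('v \<Rightarrow> item \<Rightarrow> real) \<Rightarrow> item \<Rightarrow> 'v set" where
  "adopted_final Q SA SB L perm tau alpha X =
     {v. \<exists>t. fst (comic_run Q SA SB L perm tau alpha t v) X = Adopted}"

definition live_pmf :: "('v \<times> 'v) set \<Rightarrow> ('v \<times> 'v \<Rightarrow> real) \<Rightarrow> ('v \<times> 'v) set pmf" where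
  "live_pmf E p = map_pmf (\<lambda>b. {e \<in> E. b e}) (Pi_pmf E False (\<lambda>e. bernoulli_pmf (p e)))"

definition perm_pmf :: "'v set \<Rightarrow> ('v \<times> 'v) set \<Rightarrow> ('v \<Rightarrow> 'v list) pmf" where
  "perm_pmf V E = Pi_pmf V [] (\<lambda>v. pmf_of_set {xs. distinct xs \<and> set xs = {u. (u, v) \<in> E}})"

definition coin_pmf :: "'v set \<Rightarrow> ('v \<Rightarrow> item) pmf" where
  "coin_pmf V = Pi_pmf V IA (\<lambda>_. pmf_of_set {IA, IB})"

definition threshold_measure :: "'v set \<Rightarrow> ('v \<Rightarrow> item \<Rightarrow> real) measure" where
  "threshold_measure V = (\<Pi>\<^sub>M v\<in>V. \<Pi>\<^sub>M X\<in>(UNIV :: item set). uniform_measure lborel {0..1::real})"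

definition comic_space :: "'v set \<Rightarrow> ('v \<times> 'v) set \<Rightarrow> ('v \<times> 'v \<Rightarrow> real)
    \<Rightarrow> (((('v \<times> 'v) set) \<times> ('v \<Rightarrow> 'v list) \<times> ('v \<Rightarrow> item)) \<times> ('v \<Rightarrow> item \<Rightarrow> real)) measure" where
  "comic_space V E p =
     measure_pmf (pair_pmf (live_pmf E p) (pair_pmf (perm_pmf V E) (coin_pmf V)))
       \<Otimes>\<^sub>M threshold_measure V"

definition sigma_A :: "'v set \<Rightarrow> ('v \<times> 'v) set \<Rightarrow> ('v \<times> 'v \<Rightarrow> real) \<Rightarrow> gap
    \<Rightarrow> 'v set \<Rightarrow> 'v set \<Rightarrow> real" where
  "sigma_A V E p Q SA SB =
     (\<integral>\<omega>. (case \<omega> of ((L, perm, tau), alpha) \<Rightarrow>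
              real (card (V \<inter> adopted_final Q SA SB L perm tau alpha IA)))
      \<partial>comic_space V E p)"

end

theory Submission
  imports Defs
begin


lemma other_other[simp]: "other (other X) = X" by (cases X) auto
lemma other_neq[simp]: "other X \<noteq> X" "X \<noteq> other X" by (cases X; simp)+
lemma item_cases2: "Y \<noteq> X \<Longrightarrow> Y = other X" by (cases X; cases Y) auto

lemma informed_nonidle_noop: "fst st X \<noteq> Idle \<Longrightarrow> informed Q a X st = st"
  by (cases st) (simp add: informed_def)

lemma informed_sets: "fst (informed Q a X st) X \<noteq> Idle"
  by (cases st; cases X) (auto simp: informed_def Let_def)

lemma informed_persist: "fst st Z \<noteq> Idle \<Longrightarrow> fst (informed Q a X st) Z \<noteq> Idle"
  by (cases st; cases X; cases Z) (auto simp: informed_def Let_def)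

lemma informed_adopt_persist: "fst st Z = Adopted \<Longrightarrow> fst (informed Q a X st) Z = Adopted"
  by (cases st; cases X; cases Z) (auto simp: informed_def Let_def)

lemma informed_ni_back: "fst (informed Q a Y st) X \<noteq> Idle \<Longrightarrow> fst st X \<noteq> Idle \<or> X = Y"
  by (cases st; cases X; cases Y) (auto simp: informed_def Let_def split: if_splits)

lemma informed_new_mono: "set (snd st) \<subseteq> set (snd (informed Q a Y st))"
  by (cases st; cases Y) (auto simp: informed_def Let_def)

lemma informed_new_adopted:
  "(\<forall>Z\<in>set (snd st). fst st Z = Adopted) \<Longrightarrow> Z \<in> set (snd (informed Q a Y st)) \<Longrightarrow> fst (informed Q a Y st) Z = Adopted"
  by (cases st; cases Y; cases Z) (auto simp: informed_def Let_def split: if_splits)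

lemma informed_adopted_back:
  "fst (informed Q a Y st) X = Adopted \<Longrightarrow> fst st X = Adopted \<or> X \<in> set (snd (informed Q a Y st))"
  by (cases st; cases X; cases Y) (auto simp: informed_def Let_def split: if_splits)

lemma fold_persist: "fst st Z \<noteq> Idle \<Longrightarrow> fst (fold (informed Q a) xs st) Z \<noteq> Idle"
  by (induction xs arbitrary: st) (auto simp: informed_persist)

lemma fold_adopt_persist: "fst st Z = Adopted \<Longrightarrow> fst (fold (informed Q a) xs st) Z = Adopted"
  by (induction xs arbitrary: st) (auto simp: informed_adopt_persist)

lemma fold_sets: "X \<in> set xs \<Longrightarrow> fst (fold (informed Q a) xs st) X \<noteq> Idle"
proof (induction xs arbitrary: st)
  case (Cons y xs)
  show ?case
  proof (cases "X = y")
    case True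
    then show ?thesis using fold_persist[OF informed_sets[of Q a X st]] by simp
  next
    case False
    then show ?thesis using Cons.IH[of "informed Q a y st"] Cons.prems by simp
  qed
qed simp

lemma fold_ni_back: "fst (fold (informed Q a) xs st) X \<noteq> Idle \<Longrightarrow> fst st X \<noteq> Idle \<or> X \<in> set xs"
proof (induction xs arbitrary: st)
  case (Cons y xs)
  from Cons.IH[of "informed Q a y st"] Cons.prems
  have "fst (informed Q a y st) X \<noteq> Idle \<or> X \<in> set xs" by simp
  then show ?case using informed_ni_back[of Q a y st X] by auto
qed simp

lemma fold_new_mono: "set (snd st) \<subseteq> set (snd (fold (informed Q a) xs st))"
proof (induction xs arbitrary: st)
  case (Cons y xs)
  show ?case using Cons.IH[of "informed Q a y st"] informed_new_mono[of st Q a y] by simp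
qed simp

lemma fold_new_adopted:
  "(\<forall>Z\<in>set (snd st). fst st Z = Adopted) \<Longrightarrow> Z \<in> set (snd (fold (informed Q a) xs st)) \<Longrightarrow> fst (fold (informed Q a) xs st) Z = Adopted"
proof (induction xs arbitrary: st)
  case (Cons y xs)
  have "\<forall>Z\<in>set (snd (informed Q a y st)). fst (informed Q a y st) Z = Adopted"
    using Cons.prems(1) informed_new_adopted by blast
  then show ?case using Cons by simp
qed simp

lemma fold_adopted_back:
  "fst (fold (informed Q a) xs st) X = Adopted \<Longrightarrow> fst st X = Adopted \<or> X \<in> set (snd (fold (informed Q a) xs st))"
proof (induction xs arbitrary: st)
  case (Cons y xs)
  from Cons.IH[of "informed Q a y st"] Cons.prems have
    "fst (informed Q a y st) X = Adopted \<or> X \<in> set (snd (fold (informed Q a) xs (informed Q a y st)))" by simp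
  then show ?case
    using informed_adopted_back[of Q a y st X] fold_new_mono[of "informed Q a y st" Q a xs] by auto
qed simp

lemma fold_all_noop: "(\<forall>y\<in>set xs. fst st y \<noteq> Idle) \<Longrightarrow> fold (informed Q a) xs st = st"
  by (induction xs) (auto simp: informed_nonidle_noop)

definition dd :: "item list \<Rightarrow> item list" where
  "dd xs = (case xs of [] \<Rightarrow> [] | x # _ \<Rightarrow> x # (if other x \<in> set xs then [other x] else []))"

lemma fold_after: "fst st x \<noteq> Idle \<Longrightarrow>
   fold (informed Q a) ys st = (if other x \<in> set ys then informed Q a (other x) st else st)"
proof (induction ys arbitrary: st)
  case (Cons y ys)
  show ?case
  proof (cases "y = x")
    case True
    then show ?thesis using Cons by (auto simp: informed_nonidle_noop)
  next
    case False
    then have y: "y = other x" by (rule item_cases2)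
    let ?s = "informed Q a (other x) st"
    have "\<forall>z\<in>set ys. fst ?s z \<noteq> Idle"
    proof
      fix z assume "z \<in> set ys"
      show "fst ?s z \<noteq> Idle"
        using Cons.prems informed_sets[of Q a "other x" st] informed_persist[of st x Q a "other x"]
        by (cases "z = x") (auto dest: item_cases2)
    qed
    then show ?thesis using y by (simp add: fold_all_noop)
  qed
qed simp

lemma fold_dd: "fold (informed Q a) xs st = fold (informed Q a) (dd xs) st"
proof (cases xs)
  case (Cons x ys)
  have "fold (informed Q a) ys (informed Q a x st) = (if other x \<in> set ys then informed Q a (other x) (informed Q a x st) else informed Q a x st)"
    by (rule fold_after) (rule informed_sets)
  then show ?thesis using Cons by (auto simp: dd_def)
qed (simp add: dd_def)

lemma dd_set: "set (dd xs) = set xs"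
  by (cases xs) (auto simp: dd_def dest: item_cases2)

lemma dd_hd: "xs \<noteq> [] \<Longrightarrow> hd (dd xs) = hd xs" "dd xs = [] \<longleftrightarrow> xs = []"
  by (cases xs; auto simp: dd_def)+




definition seedset :: "'v set \<Rightarrow> 'v set \<Rightarrow> item \<Rightarrow> 'v set" where
  "seedset SA SB X = (case X of IA \<Rightarrow> SA | IB \<Rightarrow> SB)"

locale crun =
  fixes Q :: gap and SA SB :: "'v set" and L :: "('v \<times> 'v) set" and perm :: "'v \<Rightarrow> 'v list"
    and tau :: "'v \<Rightarrow> item" and alpha :: "'v \<Rightarrow> item \<Rightarrow> real"
begin

abbreviation R where "R t \<equiv> comic_run Q SA SB L perm tau alpha t"

definition sq :: "nat \<Rightarrow> 'v \<Rightarrow> item list" where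
  "sq t v = concat (map (\<lambda>u. if (u, v) \<in> L then snd (R t u) else []) (perm v))"

lemma R_Suc: "R (Suc t) v = fold (informed Q (alpha v)) (sq t v) (fst (R t v), [])"
  by (simp add: comic_step_def sq_def comic_run.simps)


lemma sq_iff: "X \<in> set (sq t v) \<longleftrightarrow> (\<exists>u\<in>set (perm v). (u, v) \<in> L \<and> X \<in> set (snd (R t u)))"
  by (auto simp: sq_def split: if_splits)

lemma R0_ad: "fst (R 0 v) X = Adopted \<longleftrightarrow> v \<in> seedset SA SB X"
  by (cases X) (auto simp: seed_state_def seedset_def comic_run.simps)
lemma R0_ni: "fst (R 0 v) X \<noteq> Idle \<longleftrightarrow> v \<in> seedset SA SB X"
  by (cases X) (auto simp: seed_state_def seedset_def comic_run.simps)
lemma R0_new: "X \<in> set (snd (R 0 v)) \<longleftrightarrow> v \<in> seedset SA SB X"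
  by (cases X) (auto simp: seed_state_def seedset_def comic_run.simps)

declare comic_run.simps[simp del]

lemma persist_Suc: "fst (R t v) X \<noteq> Idle \<Longrightarrow> fst (R (Suc t) v) X \<noteq> Idle"
  unfolding R_Suc by (rule fold_persist) simp
lemma persist_ad_Suc: "fst (R t v) X = Adopted \<Longrightarrow> fst (R (Suc t) v) X = Adopted"
  unfolding R_Suc by (rule fold_adopt_persist) simp

lemma persist: "t \<le> t' \<Longrightarrow> fst (R t v) X \<noteq> Idle \<Longrightarrow> fst (R t' v) X \<noteq> Idle"
  by (induction t' rule: dec_induct) (use persist_Suc in blast)+
lemma persist_ad: "t \<le> t' \<Longrightarrow> fst (R t v) X = Adopted \<Longrightarrow> fst (R t' v) X = Adopted"
  by (induction t' rule: dec_induct) (use persist_ad_Suc in blast)+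

lemma new_adopted: "X \<in> set (snd (R t v)) \<Longrightarrow> fst (R t v) X = Adopted"
proof (induction t arbitrary: X v)
  case 0 then show ?case by (cases X) (auto simp: seed_state_def comic_run.simps split: if_splits)
next
  case (Suc t)
  have "fst (fold (informed Q (alpha v)) (sq t v) (fst (R t v), [])) X = Adopted"
    by (rule fold_new_adopted) (use Suc.prems R_Suc in auto)
  then show ?case by (simp add: R_Suc)
qed

lemma ad_new: assumes "fst (R t v) X = Adopted" shows "X \<in> set (snd (R t v)) \<or> (\<exists>t'. t = Suc t' \<and> fst (R t' v) X = Adopted)"
proof (cases t)
  case 0 then show ?thesis using assms by (simp add: R0_new R0_ad)
next
  case (Suc t')
  then show ?thesis using assms fold_adopted_back[of Q "alpha v" "sq t' v" "(fst (R t' v), [])" X]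
    by (auto simp: R_Suc)
qed

lemma ni_Suc_back: "fst (R (Suc t) v) X \<noteq> Idle \<Longrightarrow> fst (R t v) X \<noteq> Idle \<or> X \<in> set (sq t v)"
  using fold_ni_back[of Q "alpha v" "sq t v" "(fst (R t v), [])" X] by (simp add: R_Suc)

lemma ni_of_sq: "X \<in> set (sq t v) \<Longrightarrow> fst (R (Suc t) v) X \<noteq> Idle"
  unfolding R_Suc by (rule fold_sets)

lemma ad_inform: "fst (R t u) X = Adopted \<Longrightarrow> (u, v) \<in> L \<Longrightarrow> u \<in> set (perm v) \<Longrightarrow> fst (R (Suc t) v) X \<noteq> Idle"
proof (induction t)
  case 0
  then have "X \<in> set (sq 0 v)" using sq_iff R0_new R0_ad by blast
  then show ?case by (rule ni_of_sq)
next
  case (Suc t)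
  from ad_new[OF Suc.prems(1)] show ?case
  proof
    assume "X \<in> set (snd (R (Suc t) u))"
    then have "X \<in> set (sq (Suc t) v)" using sq_iff Suc.prems by blast
    then show ?thesis by (rule ni_of_sq)
  next
    assume "\<exists>t'. Suc t = Suc t' \<and> fst (R t' u) X = Adopted"
    then show ?thesis using Suc.IH Suc.prems persist_Suc by auto
  qed
qed

lemma ni_char: "fst (R (Suc t) v) X \<noteq> Idle \<longleftrightarrow>
   v \<in> seedset SA SB X \<or> (\<exists>u\<in>set (perm v). (u, v) \<in> L \<and> fst (R t u) X = Adopted)"
proof
  assume "v \<in> seedset SA SB X \<or> (\<exists>u\<in>set (perm v). (u, v) \<in> L \<and> fst (R t u) X = Adopted)"
  then show "fst (R (Suc t) v) X \<noteq> Idle"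
  proof
    assume "v \<in> seedset SA SB X"
    then show ?thesis using persist[of 0 "Suc t" v X] R0_ni by auto
  qed (use ad_inform in blast)
next
  show "fst (R (Suc t) v) X \<noteq> Idle \<Longrightarrow> v \<in> seedset SA SB X \<or> (\<exists>u\<in>set (perm v). (u, v) \<in> L \<and> fst (R t u) X = Adopted)"
  proof (induction t)
    case 0
    from ni_Suc_back[OF 0] show ?case
      using R0_ni sq_iff new_adopted by blast
  next
    case (Suc t)
    from ni_Suc_back[OF Suc.prems] show ?case
    proof
      assume "fst (R (Suc t) v) X \<noteq> Idle"
      then show ?thesis using Suc.IH persist_ad_Suc by blast
    next
      assume "X \<in> set (sq (Suc t) v)"
      then show ?thesis using sq_iff new_adopted by blast
    qed
  qed
qed

lemma ni_char0: "fst (R 0 v) X \<noteq> Idle \<longleftrightarrow> v \<in> seedset SA SB X" by (rule R0_ni)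

end



definition trig :: "gap \<Rightarrow> (item \<Rightarrow> real) \<Rightarrow> (item \<Rightarrow> bool) \<Rightarrow> (item \<Rightarrow> status) \<Rightarrow> item \<Rightarrow> bool" where
  "trig Q a sd s Z \<longleftrightarrow> sd Z \<or> (s Z \<noteq> Idle \<and> a Z \<le> q_empty Q Z)"

definition invP :: "gap \<Rightarrow> (item \<Rightarrow> real) \<Rightarrow> (item \<Rightarrow> bool) \<Rightarrow> (item \<Rightarrow> status) \<Rightarrow> bool" where
  "invP Q a sd s \<longleftrightarrow> (\<forall>Z. sd Z \<longrightarrow> s Z = Adopted) \<and> (\<forall>Z. s Z = Rejected \<longrightarrow> \<not> a Z \<le> q_cond Q Z) \<and>
     (\<forall>Z. s Z = Adopted \<longleftrightarrow> trig Q a sd s Z \<or> (s Z \<noteq> Idle \<and> a Z \<le> q_cond Q Z \<and> trig Q a sd s (other Z)))"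

lemma invP_informed:
  assumes "gap_Qplus Q" "invP Q a sd (fst st)"
  shows "invP Q a sd (fst (informed Q a X st))"
proof -
  obtain s n where st: "st = (s, n)" by (cases st)
  have all: "(\<forall>Z. P Z) \<longleftrightarrow> P IA \<and> P IB" for P by (metis item.exhaust)
  show ?thesis using assms unfolding st
    apply (cases X; cases "s IA"; cases "s IB")
    apply (auto simp: invP_def trig_def informed_def Let_def gap_Qplus_def all)
    done
qed

lemma fold_preserve:
  assumes "\<And>x st. P (fst st) \<Longrightarrow> P (fst (f x st))" "P (fst st)"
  shows "P (fst (fold f xs st))"
  using assms(2)
proof (induction xs arbitrary: st)
  case (Cons y xs)
  show ?case using Cons.IH[of "f y st"] assms(1)[OF Cons.prems] by simp
qed simp

lemma invP_fold: "gap_Qplus Q \<Longrightarrow> invP Q a sd (fst st) \<Longrightarrow> invP Q a sd (fst (fold (informed Q a) xs st))"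
  by (rule fold_preserve[where P="invP Q a sd"]) (auto intro: invP_informed)

lemma invP_mono:
  assumes "invP Q a sd s" "invP Q a sd' s'" "\<forall>Z. sd Z \<longrightarrow> sd' Z" "\<forall>Z. s Z \<noteq> Idle \<longrightarrow> s' Z \<noteq> Idle"
    "s X = Adopted"
  shows "s' X = Adopted"
  using assms unfolding invP_def trig_def by metis

context crun begin

lemma invP_run: "gap_Qplus Q \<Longrightarrow> invP Q (alpha v) (\<lambda>Z. v \<in> seedset SA SB Z) (fst (R t v))"
proof (induction t)
  case 0
  have all: "(\<forall>Z. P Z) \<longleftrightarrow> P IA \<and> P IB" for P by (metis item.exhaust)
  show ?case
    by (auto simp: invP_def trig_def all comic_run.simps seed_state_def seedset_def)
next
  case (Suc t)
  then show ?case unfolding R_Suc by (intro invP_fold) auto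
qed

end

lemma qplus_mono_run:
  assumes "gap_Qplus Q" "SA \<subseteq> SA'" "SB \<subseteq> SB'"
  shows "(fst (comic_run Q SA SB L perm tau alpha t v) X = Adopted \<longrightarrow> fst (comic_run Q SA' SB' L perm tau alpha t v) X = Adopted)
    \<and> (fst (comic_run Q SA SB L perm tau alpha t v) X \<noteq> Idle \<longrightarrow> fst (comic_run Q SA' SB' L perm tau alpha t v) X \<noteq> Idle)"
proof -
  interpret r1: crun Q SA SB L perm tau alpha .
  interpret r2: crun Q SA' SB' L perm tau alpha .
  have seeds: "v \<in> seedset SA SB Z \<Longrightarrow> v \<in> seedset SA' SB' Z" for v Z
    using assms by (cases Z) (auto simp: seedset_def)
  have ni: "\<forall>v Z. fst (r1.R t v) Z \<noteq> Idle \<longrightarrow> fst (r2.R t v) Z \<noteq> Idle" for t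
  proof (induction t)
    case 0 then show ?case using r1.R0_ni r2.R0_ni seeds by blast
  next
    case (Suc t)
    have ad: "fst (r1.R t v) Z = Adopted \<Longrightarrow> fst (r2.R t v) Z = Adopted" for v Z
      using invP_mono[OF r1.invP_run[OF assms(1)] r2.invP_run[OF assms(1)]] seeds Suc.IH by blast
    show ?case
    proof (intro allI impI)
      fix v Z assume "fst (r1.R (Suc t) v) Z \<noteq> Idle"
      then show "fst (r2.R (Suc t) v) Z \<noteq> Idle"
        unfolding r1.ni_char r2.ni_char using seeds ad by blast
    qed
  qed
  show ?thesis
    using invP_mono[OF r1.invP_run[OF assms(1)] r2.invP_run[OF assms(1)]] seeds ni by blast
qed




definition invM :: "gap \<Rightarrow> (item \<Rightarrow> real) \<Rightarrow> (item \<Rightarrow> bool) \<Rightarrow> (item \<Rightarrow> status) \<Rightarrow> bool" where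
  "invM Q a sd s \<longleftrightarrow> (\<forall>Z.
     (sd Z \<longrightarrow> s Z = Adopted) \<and>
     (s Z = Suspended \<longrightarrow> \<not> a Z \<le> q_empty Q Z \<and> s (other Z) \<noteq> Adopted) \<and>
     (s Z = Rejected \<longrightarrow> \<not> a Z \<le> q_cond Q Z \<and> (a Z \<le> q_empty Q Z \<longrightarrow> s (other Z) = Adopted)) \<and>
     (s Z = Adopted \<longrightarrow> sd Z \<or> a Z \<le> q_empty Q Z))"

lemma all_item: "(\<forall>Z. P Z) \<longleftrightarrow> P IA \<and> P IB" by (metis item.exhaust)

lemma invM_informed:
  assumes "gap_Qminus Q" "invM Q a sd (fst st)"
  shows "invM Q a sd (fst (informed Q a X st))"
proof -
  obtain s n where st: "st = (s, n)" by (cases st)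
  show ?thesis using assms unfolding st
    by (cases X; cases "s IA"; cases "s IB")
      (auto simp: invM_def informed_def Let_def gap_Qminus_def all_item)
qed

lemma invM_fold: "gap_Qminus Q \<Longrightarrow> invM Q a sd (fst st) \<Longrightarrow> invM Q a sd (fst (fold (informed Q a) xs st))"
  by (rule fold_preserve[where P="invM Q a sd"]) (auto intro: invM_informed)

lemma dd_cases: "dd xs \<in> {[], [IA], [IB], [IA, IB], [IB, IA]}"
  by (cases xs; cases "hd xs") (auto simp: dd_def)




definition YB :: "gap \<Rightarrow> (item \<Rightarrow> real) \<Rightarrow> (item \<Rightarrow> status) \<Rightarrow> item list \<Rightarrow> item \<Rightarrow> bool" where
  "YB Q a s d Y \<longleftrightarrow> s Y = Adopted \<or> (s Y = Idle \<and> Y \<in> set d \<and> hd d = Y \<and> a Y \<le> q_empty Q Y)"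

lemma invM_item: "invM Q a sd s \<longleftrightarrow>
  ((sd IA \<longrightarrow> s IA = Adopted) \<and>
     (s IA = Suspended \<longrightarrow> \<not> a IA \<le> q_empty Q IA \<and> s IB \<noteq> Adopted) \<and>
     (s IA = Rejected \<longrightarrow> \<not> a IA \<le> q_cond Q IA \<and> (a IA \<le> q_empty Q IA \<longrightarrow> s IB = Adopted)) \<and>
     (s IA = Adopted \<longrightarrow> sd IA \<or> a IA \<le> q_empty Q IA)) \<and>
  ((sd IB \<longrightarrow> s IB = Adopted) \<and>
     (s IB = Suspended \<longrightarrow> \<not> a IB \<le> q_empty Q IB \<and> s IA \<noteq> Adopted) \<and>
     (s IB = Rejected \<longrightarrow> \<not> a IB \<le> q_cond Q IB \<and> (a IB \<le> q_empty Q IB \<longrightarrow> s IA = Adopted)) \<and>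
     (s IB = Adopted \<longrightarrow> sd IB \<or> a IB \<le> q_empty Q IB))"
  unfolding invM_def all_item by simp

lemma charM_ad_0:
  assumes "gap_Qminus Q" "invM Q a sd s"
  shows "fst (fold (informed Q a) [] (s, [])) X = Adopted \<longleftrightarrow>
    s X = Adopted \<or> (s X = Idle \<and> X \<in> set [] \<and> (a X \<le> q_cond Q X \<or> (a X \<le> q_empty Q X \<and> \<not> YB Q a s [] (other X))))"
  using assms unfolding invM_item gap_Qminus_def
  by (cases X; cases "s IA"; cases "s IB") (simp_all add: informed_def YB_def)

lemma charM_new_0:
  shows "X \<in> set (snd (fold (informed Q a) [] (s, []))) \<longleftrightarrow> fst (fold (informed Q a) [] (s, [])) X = Adopted \<and> s X \<noteq> Adopted"
  by (cases X; cases "s IA"; cases "s IB") (simp_all add: informed_def)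

lemma charM_hd_0:
  assumes "gap_Qminus Q" "invM Q a sd s"
    "X \<in> set (snd (fold (informed Q a) [] (s, [])))" "other X \<in> set (snd (fold (informed Q a) [] (s, [])))"
  shows "hd (snd (fold (informed Q a) [] (s, []))) = hd [] \<and> s X = Idle \<and> s (other X) = Idle \<and> [] \<noteq> []"
  using assms unfolding invM_item gap_Qminus_def
  by (cases X; cases "s IA"; cases "s IB") (simp_all add: informed_def split: if_splits)

lemma charM_ad_1:
  assumes "gap_Qminus Q" "invM Q a sd s"
  shows "fst (fold (informed Q a) [IA] (s, [])) X = Adopted \<longleftrightarrow>
    s X = Adopted \<or> (s X = Idle \<and> X \<in> set [IA] \<and> (a X \<le> q_cond Q X \<or> (a X \<le> q_empty Q X \<and> \<not> YB Q a s [IA] (other X))))"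
  using assms unfolding invM_item gap_Qminus_def
  by (cases X; cases "s IA"; cases "s IB") (simp_all add: informed_def YB_def)

lemma charM_new_1:
  shows "X \<in> set (snd (fold (informed Q a) [IA] (s, []))) \<longleftrightarrow> fst (fold (informed Q a) [IA] (s, [])) X = Adopted \<and> s X \<noteq> Adopted"
  by (cases X; cases "s IA"; cases "s IB") (simp_all add: informed_def)

lemma charM_hd_1:
  assumes "gap_Qminus Q" "invM Q a sd s"
    "X \<in> set (snd (fold (informed Q a) [IA] (s, [])))" "other X \<in> set (snd (fold (informed Q a) [IA] (s, [])))"
  shows "hd (snd (fold (informed Q a) [IA] (s, []))) = hd [IA] \<and> s X = Idle \<and> s (other X) = Idle \<and> [IA] \<noteq> []"
  using assms unfolding invM_item gap_Qminus_def
  by (cases X; cases "s IA"; cases "s IB") (simp_all add: informed_def split: if_splits)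

lemma charM_ad_2:
  assumes "gap_Qminus Q" "invM Q a sd s"
  shows "fst (fold (informed Q a) [IB] (s, [])) X = Adopted \<longleftrightarrow>
    s X = Adopted \<or> (s X = Idle \<and> X \<in> set [IB] \<and> (a X \<le> q_cond Q X \<or> (a X \<le> q_empty Q X \<and> \<not> YB Q a s [IB] (other X))))"
  using assms unfolding invM_item gap_Qminus_def
  by (cases X; cases "s IA"; cases "s IB") (simp_all add: informed_def YB_def)

lemma charM_new_2:
  shows "X \<in> set (snd (fold (informed Q a) [IB] (s, []))) \<longleftrightarrow> fst (fold (informed Q a) [IB] (s, [])) X = Adopted \<and> s X \<noteq> Adopted"
  by (cases X; cases "s IA"; cases "s IB") (simp_all add: informed_def)

lemma charM_hd_2:
  assumes "gap_Qminus Q" "invM Q a sd s"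
    "X \<in> set (snd (fold (informed Q a) [IB] (s, [])))" "other X \<in> set (snd (fold (informed Q a) [IB] (s, [])))"
  shows "hd (snd (fold (informed Q a) [IB] (s, []))) = hd [IB] \<and> s X = Idle \<and> s (other X) = Idle \<and> [IB] \<noteq> []"
  using assms unfolding invM_item gap_Qminus_def
  by (cases X; cases "s IA"; cases "s IB") (simp_all add: informed_def split: if_splits)

lemma charM_ad_3:
  assumes "gap_Qminus Q" "invM Q a sd s"
  shows "fst (fold (informed Q a) [IA, IB] (s, [])) X = Adopted \<longleftrightarrow>
    s X = Adopted \<or> (s X = Idle \<and> X \<in> set [IA, IB] \<and> (a X \<le> q_cond Q X \<or> (a X \<le> q_empty Q X \<and> \<not> YB Q a s [IA, IB] (other X))))"
  using assms unfolding invM_item gap_Qminus_def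
  by (cases X; cases "s IA"; cases "s IB") (simp_all add: informed_def YB_def)

lemma charM_new_3:
  shows "X \<in> set (snd (fold (informed Q a) [IA, IB] (s, []))) \<longleftrightarrow> fst (fold (informed Q a) [IA, IB] (s, [])) X = Adopted \<and> s X \<noteq> Adopted"
  by (cases X; cases "s IA"; cases "s IB") (simp_all add: informed_def)

lemma charM_hd_3:
  assumes "gap_Qminus Q" "invM Q a sd s"
    "X \<in> set (snd (fold (informed Q a) [IA, IB] (s, [])))" "other X \<in> set (snd (fold (informed Q a) [IA, IB] (s, [])))"
  shows "hd (snd (fold (informed Q a) [IA, IB] (s, []))) = hd [IA, IB] \<and> s X = Idle \<and> s (other X) = Idle \<and> [IA, IB] \<noteq> []"
  using assms unfolding invM_item gap_Qminus_def
  by (cases X; cases "s IA"; cases "s IB") (simp_all add: informed_def split: if_splits)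

lemma charM_ad_4:
  assumes "gap_Qminus Q" "invM Q a sd s"
  shows "fst (fold (informed Q a) [IB, IA] (s, [])) X = Adopted \<longleftrightarrow>
    s X = Adopted \<or> (s X = Idle \<and> X \<in> set [IB, IA] \<and> (a X \<le> q_cond Q X \<or> (a X \<le> q_empty Q X \<and> \<not> YB Q a s [IB, IA] (other X))))"
  using assms unfolding invM_item gap_Qminus_def
  by (cases X; cases "s IA"; cases "s IB") (simp_all add: informed_def YB_def)

lemma charM_new_4:
  shows "X \<in> set (snd (fold (informed Q a) [IB, IA] (s, []))) \<longleftrightarrow> fst (fold (informed Q a) [IB, IA] (s, [])) X = Adopted \<and> s X \<noteq> Adopted"
  by (cases X; cases "s IA"; cases "s IB") (simp_all add: informed_def)

lemma charM_hd_4: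
  assumes "gap_Qminus Q" "invM Q a sd s"
    "X \<in> set (snd (fold (informed Q a) [IB, IA] (s, [])))" "other X \<in> set (snd (fold (informed Q a) [IB, IA] (s, [])))"
  shows "hd (snd (fold (informed Q a) [IB, IA] (s, []))) = hd [IB, IA] \<and> s X = Idle \<and> s (other X) = Idle \<and> [IB, IA] \<noteq> []"
  using assms unfolding invM_item gap_Qminus_def
  by (cases X; cases "s IA"; cases "s IB") (simp_all add: informed_def split: if_splits)

lemma charM_ad:
  assumes "gap_Qminus Q" "invM Q a sd s" "d \<in> {[], [IA], [IB], [IA, IB], [IB, IA]}"
  shows "fst (fold (informed Q a) d (s, [])) X = Adopted \<longleftrightarrow>
    s X = Adopted \<or> (s X = Idle \<and> X \<in> set d \<and> (a X \<le> q_cond Q X \<or> (a X \<le> q_empty Q X \<and> \<not> YB Q a s d (other X))))"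
  using assms(3) charM_ad_0[OF assms(1,2)] charM_ad_1[OF assms(1,2)] charM_ad_2[OF assms(1,2)] charM_ad_3[OF assms(1,2)] charM_ad_4[OF assms(1,2)]
  by (elim insertE emptyE) blast+

lemma charM_new:
  assumes "d \<in> {[], [IA], [IB], [IA, IB], [IB, IA]}"
  shows "X \<in> set (snd (fold (informed Q a) d (s, []))) \<longleftrightarrow> fst (fold (informed Q a) d (s, [])) X = Adopted \<and> s X \<noteq> Adopted"
  using assms by (elim insertE emptyE; simp only: charM_new_0 charM_new_1 charM_new_2 charM_new_3 charM_new_4)

lemma charM_hd:
  assumes "gap_Qminus Q" "invM Q a sd s" "d \<in> {[], [IA], [IB], [IA, IB], [IB, IA]}"
    "X \<in> set (snd (fold (informed Q a) d (s, [])))" "other X \<in> set (snd (fold (informed Q a) d (s, [])))"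
  shows "hd (snd (fold (informed Q a) d (s, []))) = hd d \<and> s X = Idle \<and> s (other X) = Idle \<and> d \<noteq> []"
  using assms(3-) charM_hd_0[OF assms(1,2)] charM_hd_1[OF assms(1,2)] charM_hd_2[OF assms(1,2)] charM_hd_3[OF assms(1,2)] charM_hd_4[OF assms(1,2)]
  by (elim insertE emptyE) blast+

lemma charM_ni:
  "fst (fold (informed Q a) d (s, [])) X \<noteq> Idle \<longleftrightarrow> s X \<noteq> Idle \<or> X \<in> set d"
  using fold_ni_back[of Q a d "(s, [])" X] fold_sets[of X d Q a "(s, [])"] fold_persist[of "(s, [])" X Q a d]
  by auto




lemma hd_two: "d \<noteq> [] \<Longrightarrow> hd d \<noteq> X \<Longrightarrow> hd d = other X"
  by (metis item_cases2)

lemma invM_at: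
  assumes "invM Q a sd s"
  shows "s Z = Suspended \<Longrightarrow> \<not> a Z \<le> q_empty Q Z"
    "s Z = Rejected \<Longrightarrow> \<not> a Z \<le> q_cond Q Z"
    "s Z = Rejected \<Longrightarrow> a Z \<le> q_empty Q Z \<Longrightarrow> s (other Z) = Adopted"
  using assms unfolding invM_def by blast+

lemma status_cases4: "s \<noteq> Idle \<Longrightarrow> s \<noteq> Adopted \<Longrightarrow> s \<noteq> Suspended \<Longrightarrow> s = Rejected"
  by (cases s) auto

locale node2 =
  fixes Q :: gap and a :: "item \<Rightarrow> real" and sd1 sd2 :: "item \<Rightarrow> bool" and s1 s2 :: "item \<Rightarrow> status"
    and d1 d2 :: "item list" and X :: item
  assumes qm: "gap_Qminus Q"
    and i1: "invM Q a sd1 s1" and i2: "invM Q a sd2 s2"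
    and j1: "s1 X = Adopted \<longrightarrow> s2 X = Adopted"
    and j2: "s2 (other X) = Adopted \<longrightarrow> s1 (other X) = Adopted"
    and j3: "s1 X \<noteq> Idle \<longrightarrow> s2 X \<noteq> Idle"
    and j4: "s2 (other X) \<noteq> Idle \<longrightarrow> s1 (other X) \<noteq> Idle"
    and S1: "X \<in> set d1 \<longrightarrow> X \<in> set d2 \<or> s2 X \<noteq> Idle"
    and S2: "other X \<in> set d2 \<longrightarrow> other X \<in> set d1 \<or> s1 (other X) \<noteq> Idle"
    and S3: "s2 X = Idle \<and> s1 (other X) = Idle \<longrightarrow> \<not> (d1 \<noteq> [] \<and> hd d1 = X \<and> d2 \<noteq> [] \<and> hd d2 = other X)"
    and D1: "d1 \<in> {[], [IA], [IB], [IA, IB], [IB, IA]}"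
    and D2: "d2 \<in> {[], [IA], [IB], [IA, IB], [IB, IA]}"
begin

abbreviation "r1 \<equiv> fold (informed Q a) d1 (s1, [])"
abbreviation "r2 \<equiv> fold (informed Q a) d2 (s2, [])"
abbreviation "Y \<equiv> other X"

lemma qle: "q_cond Q X \<le> q_empty Q X" "q_cond Q Y \<le> q_empty Q Y"
  using qm by (cases X; simp add: gap_Qminus_def)+

lemma hd_in: "d \<noteq> [] \<Longrightarrow> hd d \<in> set d" by simp

lemma c1: "fst r1 X = Adopted \<Longrightarrow> fst r2 X = Adopted"
proof -
  assume h: "fst r1 X = Adopted"
  note ad1 = charM_ad[OF qm i1 D1, of X] and ad2 = charM_ad[OF qm i2 D2, of X]
  show ?thesis
  proof (cases "s1 X = Adopted")
    case True then show ?thesis using j1 ad2 by blast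
  next
    case False
    with h ad1 have idle1: "s1 X = Idle" and x1: "X \<in> set d1"
      and c: "a X \<le> q_cond Q X \<or> (a X \<le> q_empty Q X \<and> \<not> YB Q a s1 d1 Y)" by auto
    have aqe: "a X \<le> q_empty Q X" using c qle by auto
    show ?thesis
    proof (cases "s2 X = Idle")
      case False
      then show ?thesis
      proof (cases "s2 X = Adopted")
        case False
        then have "s2 X = Rejected \<or> s2 X = Suspended" using \<open>s2 X \<noteq> Idle\<close> status_cases4 by blast
        then show ?thesis
        proof
          assume r: "s2 X = Rejected"
          have "s2 Y = Adopted" using invM_at(3)[OF i2 r aqe] by simp
          then have "s1 Y = Adopted" using j2 by blast
          then have "YB Q a s1 d1 Y" by (simp add: YB_def)
          then show ?thesis using c invM_at(2)[OF i2 r] by auto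
        next
          assume "s2 X = Suspended" then show ?thesis using invM_at(1)[OF i2] aqe by blast
        qed
      qed (use ad2 in blast)
    next
      case True
      then have x2: "X \<in> set d2" using S1 x1 by blast
      have "\<not> YB Q a s2 d2 Y" if nc: "\<not> a X \<le> q_cond Q X"
      proof
        assume yb2: "YB Q a s2 d2 Y"
        have nyb1: "\<not> YB Q a s1 d1 Y" using c nc by auto
        show False
        proof (cases "s2 Y = Adopted")
          case True then show False using j2 nyb1 by (simp add: YB_def)
        next
          case False
          with yb2 have y2: "s2 Y = Idle" "Y \<in> set d2" "hd d2 = Y" "a Y \<le> q_empty Q Y" by (auto simp: YB_def)
          have "s1 Y = Idle"
          proof (rule ccontr)
            assume ni: "s1 Y \<noteq> Idle"
            have "s1 Y \<noteq> Adopted" using nyb1 by (simp add: YB_def)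
            moreover have "s1 Y \<noteq> Suspended" using invM_at(1)[OF i1, of Y] y2 by blast
            ultimately have "s1 Y = Rejected" using ni status_cases4 by blast
            then have "s1 X = Adopted" using invM_at(3)[OF i1, of Y] y2 by simp
            then show False using idle1 by simp
          qed
          then have "Y \<in> set d1" using S2 y2 by blast
          have "d1 \<noteq> []" using x1 by auto
          have "d2 \<noteq> []" using x2 by auto
          have "hd d1 \<noteq> X" using S3 True \<open>s1 Y = Idle\<close> \<open>d1 \<noteq> []\<close> \<open>d2 \<noteq> []\<close> y2 by blast
          then have "hd d1 = Y" using hd_two \<open>d1 \<noteq> []\<close> by blast
          then have "YB Q a s1 d1 Y" using \<open>s1 Y = Idle\<close> \<open>Y \<in> set d1\<close> y2 by (simp add: YB_def)
          then show False using nyb1 by blast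
        qed
      qed
      then show ?thesis using ad2 True x2 c by auto
    qed
  qed
qed


lemma c2: "fst r2 Y = Adopted \<Longrightarrow> fst r1 Y = Adopted"
proof -
  assume h: "fst r2 Y = Adopted"
  note ad1 = charM_ad[OF qm i1 D1, of Y] and ad2 = charM_ad[OF qm i2 D2, of Y]
  show ?thesis
  proof (cases "s2 Y = Adopted")
    case True then show ?thesis using j2 ad1 by blast
  next
    case False
    with h ad2 have idle2: "s2 Y = Idle" and y2: "Y \<in> set d2"
      and c: "a Y \<le> q_cond Q Y \<or> (a Y \<le> q_empty Q Y \<and> \<not> YB Q a s2 d2 X)" by auto
    have aqe: "a Y \<le> q_empty Q Y" using c qle by auto
    show ?thesis
    proof (cases "s1 Y = Idle")
      case False
      then show ?thesis
      proof (cases "s1 Y = Adopted")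
        case False
        then have "s1 Y = Rejected \<or> s1 Y = Suspended" using \<open>s1 Y \<noteq> Idle\<close> status_cases4 by blast
        then show ?thesis
        proof
          assume r: "s1 Y = Rejected"
          have "s1 X = Adopted" using invM_at(3)[OF i1 r aqe] by simp
          then have "s2 X = Adopted" using j1 by blast
          then have "YB Q a s2 d2 X" by (simp add: YB_def)
          then show ?thesis using c invM_at(2)[OF i1 r] by auto
        next
          assume "s1 Y = Suspended" then show ?thesis using invM_at(1)[OF i1] aqe by blast
        qed
      qed (use ad1 in blast)
    next
      case True
      then have y1: "Y \<in> set d1" using S2 y2 by blast
      have "\<not> YB Q a s1 d1 X" if nc: "\<not> a Y \<le> q_cond Q Y"
      proof
        assume yb1: "YB Q a s1 d1 X"
        have nyb2: "\<not> YB Q a s2 d2 X" using c nc by auto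
        show False
        proof (cases "s1 X = Adopted")
          case True then show False using j1 nyb2 by (simp add: YB_def)
        next
          case False
          with yb1 have x1: "s1 X = Idle" "X \<in> set d1" "hd d1 = X" "a X \<le> q_empty Q X" by (auto simp: YB_def)
          have "s2 X = Idle"
          proof (rule ccontr)
            assume ni: "s2 X \<noteq> Idle"
            have "s2 X \<noteq> Adopted" using nyb2 by (simp add: YB_def)
            moreover have "s2 X \<noteq> Suspended" using invM_at(1)[OF i2, of X] x1 by blast
            ultimately have "s2 X = Rejected" using ni status_cases4 by blast
            then have "s2 Y = Adopted" using invM_at(3)[OF i2, of X] x1 by simp
            then show False using idle2 by simp
          qed
          have "d1 \<noteq> []" using y1 by auto
          have "d2 \<noteq> []" using y2 by auto
          have "hd d2 \<noteq> Y" using S3 True \<open>s2 X = Idle\<close> \<open>d1 \<noteq> []\<close> \<open>d2 \<noteq> []\<close> x1 by blast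
          then have "hd d2 = X" using hd_two[of d2 Y] \<open>d2 \<noteq> []\<close> by simp
          then have "X \<in> set d2" using \<open>d2 \<noteq> []\<close> hd_in by metis
          then have "YB Q a s2 d2 X" using \<open>s2 X = Idle\<close> \<open>hd d2 = X\<close> x1 by (simp add: YB_def)
          then show False using nyb2 by blast
        qed
      qed
      then show ?thesis using ad1 True y1 c by auto
    qed
  qed
qed

lemma c3: "fst r1 X \<noteq> Idle \<Longrightarrow> fst r2 X \<noteq> Idle"
  using charM_ni[of Q a d1 s1 X] charM_ni[of Q a d2 s2 X] S1 j3 by blast

lemma c4: "fst r2 Y \<noteq> Idle \<Longrightarrow> fst r1 Y \<noteq> Idle"
  using charM_ni[of Q a d1 s1 Y] charM_ni[of Q a d2 s2 Y] S2 j4 by blast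

lemma c5: "X \<in> set (snd r1) \<Longrightarrow> Y \<in> set (snd r1) \<Longrightarrow> X \<in> set (snd r2) \<Longrightarrow> Y \<in> set (snd r2)
   \<Longrightarrow> \<not> (hd (snd r1) = X \<and> hd (snd r2) = Y)"
  using charM_hd[OF qm i1 D1, of X] charM_hd[OF qm i2 D2, of X] S3 by auto

end



lemma seq_order:
  assumes "\<forall>u\<in>set P. X \<in> set (f1 u) \<longrightarrow> X \<in> set (f2 u)"
    "\<forall>u\<in>set P. Y \<in> set (f2 u) \<longrightarrow> Y \<in> set (f1 u)"
    "\<forall>u\<in>set P. X \<in> set (f1 u) \<and> Y \<in> set (f1 u) \<and> X \<in> set (f2 u) \<and> Y \<in> set (f2 u) \<longrightarrow> \<not> (hd (f1 u) = X \<and> hd (f2 u) = Y)"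
  shows "\<not> (concat (map f1 P) \<noteq> [] \<and> hd (concat (map f1 P)) = X \<and> concat (map f2 P) \<noteq> [] \<and> hd (concat (map f2 P)) = Y)"
  using assms
proof (induction P)
  case (Cons u P)
  show ?case
  proof (cases "f1 u = []")
    case True
    show ?thesis
    proof (cases "f2 u = []")
      case True
      then show ?thesis using Cons \<open>f1 u = []\<close> by simp
    next
      case False
      then show ?thesis using Cons.prems(2) \<open>f1 u = []\<close> by (auto simp: hd_append)
    qed
  next
    case False
    show ?thesis
    proof (cases "f2 u = []")
      case True
      then show ?thesis using Cons.prems(1) \<open>f1 u \<noteq> []\<close> by (auto simp: hd_append)
    next
      case False
      then show ?thesis using Cons.prems \<open>f1 u \<noteq> []\<close> by (auto simp: hd_append)
    qed
  qed
qed simp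

context crun begin

lemma invM_run: "gap_Qminus Q \<Longrightarrow> invM Q (alpha v) (\<lambda>Z. v \<in> seedset SA SB Z) (fst (R t v))"
proof (induction t)
  case 0
  show ?case
    by (auto simp: invM_def all_item comic_run.simps seed_state_def seedset_def)
next
  case (Suc t)
  then show ?case unfolding R_Suc by (intro invM_fold) auto
qed

lemma R0_new_both: "v \<in> seedset SA SB IA \<Longrightarrow> v \<in> seedset SA SB IB \<Longrightarrow>
   snd (R 0 v) = (if tau v = IA then [IA, IB] else [IB, IA])"
  by (simp add: comic_run.simps seed_state_def seedset_def)

lemma R_Suc_dd: "R (Suc t) v = fold (informed Q (alpha v)) (dd (sq t v)) (fst (R t v), [])"
  unfolding R_Suc by (rule fold_dd)

end




definition Jinv :: "item \<Rightarrow> (nat \<Rightarrow> 'v \<Rightarrow> local_state) \<Rightarrow> (nat \<Rightarrow> 'v \<Rightarrow> local_state) \<Rightarrow> nat \<Rightarrow> 'v \<Rightarrow> bool" where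
  "Jinv X r1 r2 t v \<longleftrightarrow>
     (fst (r1 t v) X = Adopted \<longrightarrow> fst (r2 t v) X = Adopted) \<and>
     (fst (r2 t v) (other X) = Adopted \<longrightarrow> fst (r1 t v) (other X) = Adopted) \<and>
     (fst (r1 t v) X \<noteq> Idle \<longrightarrow> fst (r2 t v) X \<noteq> Idle) \<and>
     (fst (r2 t v) (other X) \<noteq> Idle \<longrightarrow> fst (r1 t v) (other X) \<noteq> Idle) \<and>
     (X \<in> set (snd (r1 t v)) \<and> other X \<in> set (snd (r1 t v)) \<and> X \<in> set (snd (r2 t v)) \<and> other X \<in> set (snd (r2 t v))
        \<longrightarrow> \<not> (hd (snd (r1 t v)) = X \<and> hd (snd (r2 t v)) = other X))"

lemma qminus_run:
  assumes qm: "gap_Qminus Q"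
    and sx: "seedset SA SB X \<subseteq> seedset SA' SB' X"
    and sy: "seedset SA SB (other X) = seedset SA' SB' (other X)"
  shows "Jinv X (comic_run Q SA SB L perm tau alpha) (comic_run Q SA' SB' L perm tau alpha) t v"
proof -
  interpret r1: crun Q SA SB L perm tau alpha .
  interpret r2: crun Q SA' SB' L perm tau alpha .
  let ?Y = "other X"
  have "\<forall>v. Jinv X r1.R r2.R t v"
  proof (induction t)
    case 0
    show ?case
    proof
      fix v
      have both: "snd (r1.R 0 v) = snd (r2.R 0 v)"
        if h: "X \<in> set (snd (r1.R 0 v))" "?Y \<in> set (snd (r1.R 0 v))"
      proof -
        have a1: "v \<in> seedset SA SB X" "v \<in> seedset SA SB ?Y" using h r1.R0_new by blast+
        have a2: "v \<in> seedset SA' SB' X" "v \<in> seedset SA' SB' ?Y" using a1 sx sy by auto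
        have "v \<in> seedset SA SB IA \<and> v \<in> seedset SA SB IB" using a1 by (cases X) auto
        moreover have "v \<in> seedset SA' SB' IA \<and> v \<in> seedset SA' SB' IB" using a2 by (cases X) auto
        ultimately show ?thesis using r1.R0_new_both r2.R0_new_both by simp
      qed
      have s1: "fst (r1.R 0 v) X = Adopted \<longrightarrow> fst (r2.R 0 v) X = Adopted"
        using sx r1.R0_ad r2.R0_ad by blast
      have s2: "fst (r2.R 0 v) ?Y = Adopted \<longrightarrow> fst (r1.R 0 v) ?Y = Adopted"
        using sy r1.R0_ad r2.R0_ad by blast
      have s3: "fst (r1.R 0 v) X \<noteq> Idle \<longrightarrow> fst (r2.R 0 v) X \<noteq> Idle"
        using sx r1.R0_ni r2.R0_ni by blast
      have s4: "fst (r2.R 0 v) ?Y \<noteq> Idle \<longrightarrow> fst (r1.R 0 v) ?Y \<noteq> Idle"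
        using sy r1.R0_ni r2.R0_ni by blast
      have s5: "\<not> (hd (snd (r1.R 0 v)) = X \<and> hd (snd (r2.R 0 v)) = ?Y)"
        if "X \<in> set (snd (r1.R 0 v))" "?Y \<in> set (snd (r1.R 0 v))"
        using both[OF that] by (metis other_neq(1))
      show "Jinv X r1.R r2.R 0 v"
        unfolding Jinv_def using s1 s2 s3 s4 s5 by blast
    qed
  next
    case (Suc t)
    have IH: "\<And>v. Jinv X r1.R r2.R t v" using Suc.IH by blast
    have IHa: "fst (r1.R t u) X = Adopted \<Longrightarrow> fst (r2.R t u) X = Adopted"
      and IHb: "fst (r2.R t u) ?Y = Adopted \<Longrightarrow> fst (r1.R t u) ?Y = Adopted"
      and IHc: "X \<in> set (snd (r1.R t u)) \<and> ?Y \<in> set (snd (r1.R t u)) \<and> X \<in> set (snd (r2.R t u)) \<and> ?Y \<in> set (snd (r2.R t u))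
        \<longrightarrow> \<not> (hd (snd (r1.R t u)) = X \<and> hd (snd (r2.R t u)) = ?Y)" for u
      using IH[of u] unfolding Jinv_def by blast+
    show ?case
    proof
      fix v
      let ?s1 = "fst (r1.R t v)" and ?s2 = "fst (r2.R t v)"
      let ?q1 = "r1.sq t v" and ?q2 = "r2.sq t v"
      have adX: "X \<in> set (snd (r2.R t u)) \<or> fst (r2.R t v) X \<noteq> Idle"
        if "u \<in> set (perm v)" "(u, v) \<in> L" "X \<in> set (snd (r1.R t u))" for u
      proof -
        have "fst (r2.R t u) X = Adopted" using IHa r1.new_adopted that(3) by blast
        from r2.ad_new[OF this] show ?thesis
        proof
          assume "\<exists>t'. t = Suc t' \<and> fst (r2.R t' u) X = Adopted"
          then obtain t' where "t = Suc t'" "fst (r2.R t' u) X = Adopted" by blast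
          then show ?thesis using r2.ad_inform that by simp
        qed simp
      qed
      have adY: "?Y \<in> set (snd (r1.R t u)) \<or> fst (r1.R t v) ?Y \<noteq> Idle"
        if "u \<in> set (perm v)" "(u, v) \<in> L" "?Y \<in> set (snd (r2.R t u))" for u
      proof -
        have "fst (r1.R t u) ?Y = Adopted" using IHb r2.new_adopted that(3) by blast
        from r1.ad_new[OF this] show ?thesis
        proof
          assume "\<exists>t'. t = Suc t' \<and> fst (r1.R t' u) ?Y = Adopted"
          then obtain t' where "t = Suc t'" "fst (r1.R t' u) ?Y = Adopted" by blast
          then show ?thesis using r1.ad_inform that by simp
        qed simp
      qed
      have S1: "X \<in> set ?q1 \<longrightarrow> X \<in> set ?q2 \<or> ?s2 X \<noteq> Idle"
        using adX r1.sq_iff r2.sq_iff by blast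
      have S2: "?Y \<in> set ?q2 \<longrightarrow> ?Y \<in> set ?q1 \<or> ?s1 ?Y \<noteq> Idle"
        using adY r1.sq_iff r2.sq_iff by blast
      have S3: "?s2 X = Idle \<and> ?s1 ?Y = Idle \<longrightarrow> \<not> (?q1 \<noteq> [] \<and> hd ?q1 = X \<and> ?q2 \<noteq> [] \<and> hd ?q2 = ?Y)"
      proof
        assume idle: "?s2 X = Idle \<and> ?s1 ?Y = Idle"
        let ?f1 = "\<lambda>u. if (u, v) \<in> L then snd (r1.R t u) else []"
        let ?f2 = "\<lambda>u. if (u, v) \<in> L then snd (r2.R t u) else []"
        show "\<not> (?q1 \<noteq> [] \<and> hd ?q1 = X \<and> ?q2 \<noteq> [] \<and> hd ?q2 = ?Y)"
          unfolding r1.sq_def r2.sq_def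
        proof (rule seq_order)
          show "\<forall>u\<in>set (perm v). X \<in> set (?f1 u) \<longrightarrow> X \<in> set (?f2 u)"
            using adX idle by auto
          show "\<forall>u\<in>set (perm v). ?Y \<in> set (?f2 u) \<longrightarrow> ?Y \<in> set (?f1 u)"
            using adY idle by auto
          show "\<forall>u\<in>set (perm v). X \<in> set (?f1 u) \<and> ?Y \<in> set (?f1 u) \<and> X \<in> set (?f2 u) \<and> ?Y \<in> set (?f2 u) \<longrightarrow> \<not> (hd (?f1 u) = X \<and> hd (?f2 u) = ?Y)"
            using IHc by (auto split: if_splits)
        qed
      qed
      interpret n: node2 Q "alpha v" "\<lambda>Z. v \<in> seedset SA SB Z" "\<lambda>Z. v \<in> seedset SA' SB' Z" ?s1 ?s2 "dd ?q1" "dd ?q2" X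
      proof
        show "gap_Qminus Q" by (rule qm)
        show "invM Q (alpha v) (\<lambda>Z. v \<in> seedset SA SB Z) ?s1" by (rule r1.invM_run[OF qm])
        show "invM Q (alpha v) (\<lambda>Z. v \<in> seedset SA' SB' Z) ?s2" by (rule r2.invM_run[OF qm])
        have Jv: "(?s1 X = Adopted \<longrightarrow> ?s2 X = Adopted) \<and> (?s2 ?Y = Adopted \<longrightarrow> ?s1 ?Y = Adopted) \<and>
          (?s1 X \<noteq> Idle \<longrightarrow> ?s2 X \<noteq> Idle) \<and> (?s2 ?Y \<noteq> Idle \<longrightarrow> ?s1 ?Y \<noteq> Idle)"
          using IH[of v] unfolding Jinv_def by blast
        then show "?s1 X = Adopted \<longrightarrow> ?s2 X = Adopted" "?s2 ?Y = Adopted \<longrightarrow> ?s1 ?Y = Adopted"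
          "?s1 X \<noteq> Idle \<longrightarrow> ?s2 X \<noteq> Idle" "?s2 ?Y \<noteq> Idle \<longrightarrow> ?s1 ?Y \<noteq> Idle" by blast+
        show "X \<in> set (dd ?q1) \<longrightarrow> X \<in> set (dd ?q2) \<or> ?s2 X \<noteq> Idle" using S1 by (simp add: dd_set)
        show "?Y \<in> set (dd ?q2) \<longrightarrow> ?Y \<in> set (dd ?q1) \<or> ?s1 ?Y \<noteq> Idle" using S2 by (simp add: dd_set)
        show "?s2 X = Idle \<and> ?s1 ?Y = Idle \<longrightarrow> \<not> (dd ?q1 \<noteq> [] \<and> hd (dd ?q1) = X \<and> dd ?q2 \<noteq> [] \<and> hd (dd ?q2) = ?Y)"
          using S3 dd_hd(1)[of ?q1] dd_hd(1)[of ?q2] dd_hd(2)[of ?q1] dd_hd(2)[of ?q2] by auto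
        show "dd ?q1 \<in> {[], [IA], [IB], [IA, IB], [IB, IA]}" "dd ?q2 \<in> {[], [IA], [IB], [IA, IB], [IB, IA]}"
          by (rule dd_cases)+
      qed
      show "Jinv X r1.R r2.R (Suc t) v"
        unfolding Jinv_def r1.R_Suc_dd r2.R_Suc_dd using n.c1 n.c2 n.c3 n.c4 n.c5 by blast
    qed
  qed
  then show ?thesis by blast
qed




lemma prob_threshold: "prob_space (threshold_measure V)"
  unfolding threshold_measure_def
  by (intro prob_space_PiM prob_space_uniform_measure) auto

lemma prob_comic: "prob_space (comic_space V E p)"
  unfolding comic_space_def
  by (intro prob_space_pair prob_space_measure_pmf prob_threshold)

lemma space_threshold: "space (threshold_measure V) = (\<Pi>\<^sub>E v\<in>V. \<Pi>\<^sub>E X\<in>UNIV. UNIV)"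
  unfolding threshold_measure_def by (simp add: space_PiM)

lemma informed_cong:
  assumes "\<And>X. (a X \<le> q_cond Q X \<longleftrightarrow> b X \<le> q_cond Q X) \<and> (a X \<le> q_empty Q X \<longleftrightarrow> b X \<le> q_empty Q X)"
  shows "informed Q a = informed Q b"
proof -
  have h1: "\<And>X. (a X \<le> q_cond Q X) = (b X \<le> q_cond Q X)" and h2: "\<And>X. (a X \<le> q_empty Q X) = (b X \<le> q_empty Q X)"
    using assms by blast+
  show ?thesis unfolding informed_def by (simp only: h1 h2)
qed

lemma run_cong:
  assumes "\<And>v X. (a v X \<le> q_cond Q X \<longleftrightarrow> b v X \<le> q_cond Q X) \<and> (a v X \<le> q_empty Q X \<longleftrightarrow> b v X \<le> q_empty Q X)"
  shows "comic_run Q SA SB L perm tau a t = comic_run Q SA SB L perm tau b t"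
proof (induction t)
  case (Suc t)
  have "informed Q (a v) = informed Q (b v)" for v by (rule informed_cong) (rule assms)
  then show ?case using Suc by (simp add: comic_step_def)
qed simp



lemma comp_meas:
  assumes "v \<in> V"
  shows "(\<lambda>\<alpha>. \<alpha> v X) \<in> borel_measurable (threshold_measure V)"
proof -
  have "(\<lambda>\<alpha>. \<alpha> v) \<in> threshold_measure V \<rightarrow>\<^sub>M (\<Pi>\<^sub>M X\<in>(UNIV :: item set). uniform_measure lborel {0..1::real})"
    unfolding threshold_measure_def using assms by (rule measurable_component_singleton)
  moreover have "(\<lambda>f. f X) \<in> (\<Pi>\<^sub>M X\<in>(UNIV :: item set). uniform_measure lborel {0..1::real}) \<rightarrow>\<^sub>M uniform_measure lborel {0..1::real}"
    by (rule measurable_component_singleton) simp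
  ultimately have "(\<lambda>\<alpha>. \<alpha> v X) \<in> threshold_measure V \<rightarrow>\<^sub>M uniform_measure lborel {0..1::real}"
    by (rule measurable_compose)
  moreover have "measurable (threshold_measure V) (uniform_measure lborel {0..1::real}) = measurable (threshold_measure V) borel"
    by (rule measurable_cong_sets) auto
  ultimately show ?thesis by simp
qed


definition cmpA :: "gap \<Rightarrow> 'v set \<Rightarrow> ('v \<Rightarrow> item \<Rightarrow> real) \<Rightarrow> ('v \<times> item \<times> bool \<times> bool) set" where
  "cmpA Q V \<alpha> = (\<lambda>(v, X). (v, X, \<alpha> v X \<le> q_cond Q X, \<alpha> v X \<le> q_empty Q X)) ` (V \<times> UNIV)"

lemma cmpA_eq:
  assumes "cmpA Q V a = cmpA Q V b" "v \<in> V"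
  shows "(a v X \<le> q_cond Q X \<longleftrightarrow> b v X \<le> q_cond Q X) \<and> (a v X \<le> q_empty Q X \<longleftrightarrow> b v X \<le> q_empty Q X)"
proof -
  have "(v, X, a v X \<le> q_cond Q X, a v X \<le> q_empty Q X) \<in> cmpA Q V a"
    using assms(2) unfolding cmpA_def by force
  then have "(v, X, a v X \<le> q_cond Q X, a v X \<le> q_empty Q X) \<in> cmpA Q V b" using assms(1) by simp
  then show ?thesis unfolding cmpA_def by auto
qed

lemma cmpA_iff:
  "cmpA Q V a = c \<longleftrightarrow> c \<subseteq> V \<times> UNIV \<and>
    (\<forall>v\<in>V. \<forall>X\<in>{IA, IB}. \<forall>b1\<in>{True, False}. \<forall>b2\<in>{True, False}.
       ((v, X, b1, b2) \<in> c \<longleftrightarrow> b1 = (a v X \<le> q_cond Q X) \<and> b2 = (a v X \<le> q_empty Q X)))"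
    (is "?l \<longleftrightarrow> ?r")
proof
  assume ?l then show ?r unfolding cmpA_def by (force simp: image_iff)
next
  assume r: ?r
  have rr: "(v, X, b1, b2) \<in> c \<longleftrightarrow> b1 = (a v X \<le> q_cond Q X) \<and> b2 = (a v X \<le> q_empty Q X)"
    if v: "v \<in> V" for v X b1 b2
  proof -
    have X: "X \<in> {IA, IB}" by (cases X) auto
    have b: "b1 \<in> {True, False}" "b2 \<in> {True, False}" by auto
    show ?thesis using bspec[OF bspec[OF bspec[OF bspec[OF r[THEN conjunct2] v] X] b(1)] b(2)] .
  qed
  have cs: "c \<subseteq> V \<times> UNIV" using r by blast
  show ?l
  proof (rule set_eqI)
    fix z :: "'a \<times> item \<times> bool \<times> bool"
    obtain v X b1 b2 where z: "z = (v, X, b1, b2)" by (cases z) auto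
    show "z \<in> cmpA Q V a \<longleftrightarrow> z \<in> c"
    proof
      assume "z \<in> cmpA Q V a"
      then have v: "v \<in> V" and e: "b1 = (a v X \<le> q_cond Q X)" "b2 = (a v X \<le> q_empty Q X)"
        unfolding z cmpA_def by auto
      then show "z \<in> c" using rr unfolding z by blast
    next
      assume zc: "z \<in> c"
      then have v: "v \<in> V" using cs unfolding z by auto
      then have e: "b1 = (a v X \<le> q_cond Q X)" "b2 = (a v X \<le> q_empty Q X)"
        using rr zc unfolding z by blast+
      show "z \<in> cmpA Q V a" unfolding z cmpA_def e using v by force
    qed
  qed
qed

lemma pred_cmpA:
  assumes "finite V"
  shows "Measurable.pred (threshold_measure V) (\<lambda>a. cmpA Q V a = c)"
proof -
  have m: "v \<in> V \<Longrightarrow> (\<lambda>a. a v X) \<in> borel_measurable (threshold_measure V)" for v X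
    by (rule comp_meas)
  note [measurable] = m
  note [measurable] = assms
  show ?thesis unfolding cmpA_iff
    by measurable
qed


definition integrand :: "'v set \<Rightarrow> gap \<Rightarrow> 'v set \<Rightarrow> 'v set \<Rightarrow> ((('v \<times> 'v) set \<times> ('v \<Rightarrow> 'v list) \<times> ('v \<Rightarrow> item)) \<times> ('v \<Rightarrow> item \<Rightarrow> real)) \<Rightarrow> real" where
  "integrand V Q SA SB \<omega> = (case \<omega> of ((L, perm, tau), alpha) \<Rightarrow>
              real (card (V \<inter> adopted_final Q SA SB L perm tau alpha IA)))"

lemma sigma_A_integrand: "sigma_A V E p Q SA SB = integral\<^sup>L (comic_space V E p) (integrand V Q SA SB)"
  unfolding sigma_A_def integrand_def ..

lemma run_eq_space:
  assumes "a \<in> space (threshold_measure V)" "b \<in> space (threshold_measure V)" "cmpA Q V a = cmpA Q V b"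
  shows "comic_run Q SA SB L perm tau a t = comic_run Q SA SB L perm tau b t"
proof (rule run_cong)
  fix v X
  show "(a v X \<le> q_cond Q X \<longleftrightarrow> b v X \<le> q_cond Q X) \<and> (a v X \<le> q_empty Q X \<longleftrightarrow> b v X \<le> q_empty Q X)"
  proof (cases "v \<in> V")
    case True then show ?thesis using cmpA_eq[OF assms(3)] by blast
  next
    case False
    have "a v = undefined" using PiE_arb[OF assms(1)[unfolded space_threshold] False] .
    moreover have "b v = undefined" using PiE_arb[OF assms(2)[unfolded space_threshold] False] .
    ultimately have "a v = b v" by simp
    then show ?thesis by simp
  qed
qed

lemma integrand_cong:
  assumes "a \<in> space (threshold_measure V)" "b \<in> space (threshold_measure V)" "cmpA Q V a = cmpA Q V b"
  shows "integrand V Q SA SB (w, a) = integrand V Q SA SB (w, b)"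
proof -
  obtain L perm tau where w: "w = (L, perm, tau)" by (cases w) auto
  show ?thesis unfolding w integrand_def adopted_final_def using run_eq_space[OF assms] by simp
qed

lemma integrand_measurable:
  assumes fin: "finite V"
  shows "integrand V Q SA SB \<in> borel_measurable (comic_space V E p)"
proof -
  let ?M1 = "measure_pmf (pair_pmf (live_pmf E p) (pair_pmf (perm_pmf V E) (coin_pmf V)))"
  let ?M2 = "threshold_measure V"
  define rep where "rep c = (SOME b. b \<in> space ?M2 \<and> cmpA Q V b = c)" for c
  define G where "G w c = integrand V Q SA SB (w, rep c)" for w c
  define I where "I = cmpA Q V ` space ?M2"
  have fI: "finite (UNIV :: item set)"
  proof -
    have "(UNIV :: item set) = {IA, IB}" using item.exhaust by blast
    then show ?thesis by (metis finite.emptyI finite_insert)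
  qed
  have fB: "finite (UNIV :: bool set)" by simp
  have "finite (UNIV :: (item \<times> bool \<times> bool) set)"
    using fI fB by (metis UNIV_Times_UNIV finite_cartesian_product)
  then have "finite (Pow (V \<times> (UNIV :: (item \<times> bool \<times> bool) set)))"
    using fin by (simp add: finite_cartesian_product)
  moreover have "I \<subseteq> Pow (V \<times> UNIV)" unfolding I_def cmpA_def by auto
  ultimately have "finite I" by (rule finite_subset[rotated])
  then have cI: "countable I" by (rule countable_finite)
  have "(\<lambda>x. G (fst x) (cmpA Q V (snd x))) \<in> borel_measurable (?M1 \<Otimes>\<^sub>M ?M2)"
  proof (rule measurable_compose_countable'[where f="\<lambda>i x. G (fst x) i" and g="\<lambda>x. cmpA Q V (snd x)", OF _ _ cI])
    fix i
    show "(\<lambda>x. G (fst x) i) \<in> borel_measurable (?M1 \<Otimes>\<^sub>M ?M2)"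
      by (rule measurable_compose[OF measurable_fst]) simp
  next
    show "(\<lambda>x. cmpA Q V (snd x)) \<in> ?M1 \<Otimes>\<^sub>M ?M2 \<rightarrow>\<^sub>M count_space I"
      unfolding measurable_count_space_eq_countable[OF cI]
    proof
      show "(\<lambda>x. cmpA Q V (snd x)) \<in> space (?M1 \<Otimes>\<^sub>M ?M2) \<rightarrow> I"
        unfolding I_def space_pair_measure by auto
      show "\<forall>c\<in>I. (\<lambda>x. cmpA Q V (snd x)) -` {c} \<inter> space (?M1 \<Otimes>\<^sub>M ?M2) \<in> sets (?M1 \<Otimes>\<^sub>M ?M2)"
      proof
        fix c
        have "Measurable.pred (?M1 \<Otimes>\<^sub>M ?M2) (\<lambda>x. cmpA Q V (snd x) = c)"
          by (rule measurable_compose[OF measurable_snd pred_cmpA[OF fin]])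
        then have "{x \<in> space (?M1 \<Otimes>\<^sub>M ?M2). cmpA Q V (snd x) = c} \<in> sets (?M1 \<Otimes>\<^sub>M ?M2)"
          by (rule predE)
        moreover have "(\<lambda>x. cmpA Q V (snd x)) -` {c} \<inter> space (?M1 \<Otimes>\<^sub>M ?M2) = {x \<in> space (?M1 \<Otimes>\<^sub>M ?M2). cmpA Q V (snd x) = c}"
          by auto
        ultimately show "(\<lambda>x. cmpA Q V (snd x)) -` {c} \<inter> space (?M1 \<Otimes>\<^sub>M ?M2) \<in> sets (?M1 \<Otimes>\<^sub>M ?M2)" by simp
      qed
    qed
  qed
  moreover have "G (fst x) (cmpA Q V (snd x)) = integrand V Q SA SB x" if x: "x \<in> space (?M1 \<Otimes>\<^sub>M ?M2)" for x
  proof -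
    obtain w a where xw: "x = (w, a)" by (cases x)
    have a: "a \<in> space ?M2" using x unfolding xw space_pair_measure by auto
    have ex: "\<exists>b. b \<in> space ?M2 \<and> cmpA Q V b = cmpA Q V a" using a by blast
    have r: "rep (cmpA Q V a) \<in> space ?M2 \<and> cmpA Q V (rep (cmpA Q V a)) = cmpA Q V a"
      unfolding rep_def by (rule someI_ex[OF ex])
    show ?thesis unfolding xw G_def using integrand_cong[of "rep (cmpA Q V a)" V a Q SA SB w] r a by simp
  qed
  ultimately have "integrand V Q SA SB \<in> borel_measurable (?M1 \<Otimes>\<^sub>M ?M2)"
    using measurable_cong[of "?M1 \<Otimes>\<^sub>M ?M2" "\<lambda>x. G (fst x) (cmpA Q V (snd x))" "integrand V Q SA SB" borel] by blast
  then show ?thesis unfolding comic_space_def .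
qed

lemma integrand_integrable:
  assumes fin: "finite V"
  shows "integrable (comic_space V E p) (integrand V Q SA SB)"
proof -
  interpret prob_space "comic_space V E p" by (rule prob_comic)
  show ?thesis
  proof (rule integrable_const_bound[where B="real (card V)"])
    show "AE x in comic_space V E p. norm (integrand V Q SA SB x) \<le> real (card V)"
      by (intro AE_I2) (auto simp: integrand_def fin card_mono split: prod.splits)
  qed (rule integrand_measurable[OF fin])
qed


lemma AF_mono_lemma:
  fixes V :: "'v set"
  assumes fin: "finite V"
    and pw: "\<And>L perm tau alpha. adopted_final Q SA SB L perm tau alpha IA \<subseteq> adopted_final Q TA TB L perm tau alpha IA"
  shows "sigma_A V E p Q SA SB \<le> sigma_A V E p Q TA TB"
  unfolding sigma_A_integrand
proof (rule integral_mono[OF integrand_integrable[OF fin] integrand_integrable[OF fin]])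
  fix x :: "((('v \<times> 'v) set \<times> ('v \<Rightarrow> 'v list) \<times> ('v \<Rightarrow> item)) \<times> ('v \<Rightarrow> item \<Rightarrow> real))"
  obtain L perm tau alpha where x: "x = ((L, perm, tau), alpha)" by (metis prod.exhaust)
  have "card (V \<inter> adopted_final Q SA SB L perm tau alpha IA) \<le> card (V \<inter> adopted_final Q TA TB L perm tau alpha IA)"
    using pw[of L perm tau alpha] fin by (intro card_mono) auto
  then show "integrand V Q SA SB x \<le> integrand V Q TA TB x"
    unfolding x integrand_def by simp
qed

lemma pw_plus:
  assumes "gap_Qplus Q" "SA \<subseteq> TA" "SB \<subseteq> TB"
  shows "adopted_final Q SA SB L perm tau alpha X \<subseteq> adopted_final Q TA TB L perm tau alpha X"
  unfolding adopted_final_def using qplus_mono_run[OF assms] by blast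

lemma pw_minus_A:
  assumes "gap_Qminus Q" "SA \<subseteq> TA"
  shows "adopted_final Q SA SB L perm tau alpha IA \<subseteq> adopted_final Q TA SB L perm tau alpha IA"
proof -
  have "Jinv IA (comic_run Q SA SB L perm tau alpha) (comic_run Q TA SB L perm tau alpha) t v" for t v
    by (rule qminus_run[OF assms(1)]) (use assms(2) in \<open>auto simp: seedset_def\<close>)
  then show ?thesis unfolding adopted_final_def Jinv_def by blast
qed

lemma pw_minus_B:
  assumes "gap_Qminus Q" "SB \<subseteq> TB"
  shows "adopted_final Q SA TB L perm tau alpha IA \<subseteq> adopted_final Q SA SB L perm tau alpha IA"
proof -
  have "Jinv IB (comic_run Q SA SB L perm tau alpha) (comic_run Q SA TB L perm tau alpha) t v" for t v
    by (rule qminus_run[OF assms(1)]) (use assms(2) in \<open>auto simp: seedset_def\<close>)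
  then show ?thesis unfolding adopted_final_def Jinv_def by auto
qed

theorem theorem3:
  fixes V :: "'v set" and E :: "('v \<times> 'v) set" and p :: "'v \<times> 'v \<Rightarrow> real" and Q :: gap
  assumes "finite V" and "E \<subseteq> V \<times> V" and "\<forall>e\<in>E. 0 \<le> p e \<and> p e \<le> 1"
    and "gap_valid Q"
  shows "((gap_Qplus Q \<or> gap_Qminus Q) \<longrightarrow>
           (\<forall>SB SA TA. SB \<subseteq> V \<and> SA \<subseteq> TA \<and> TA \<subseteq> V \<longrightarrow>
             sigma_A V E p Q SA SB \<le> sigma_A V E p Q TA SB))
       \<and> (gap_Qplus Q \<longrightarrow>
           (\<forall>SA SB TB. SA \<subseteq> V \<and> SB \<subseteq> TB \<and> TB \<subseteq> V \<longrightarrow>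
             sigma_A V E p Q SA SB \<le> sigma_A V E p Q SA TB))
       \<and> (gap_Qminus Q \<longrightarrow>
           (\<forall>SA SB TB. SA \<subseteq> V \<and> SB \<subseteq> TB \<and> TB \<subseteq> V \<longrightarrow>
             sigma_A V E p Q SA TB \<le> sigma_A V E p Q SA SB))"
proof (intro conjI impI allI)
  fix SB SA TA :: "'v set"
  assume q: "gap_Qplus Q \<or> gap_Qminus Q" and s: "SB \<subseteq> V \<and> SA \<subseteq> TA \<and> TA \<subseteq> V"
  show "sigma_A V E p Q SA SB \<le> sigma_A V E p Q TA SB"
  proof (rule AF_mono_lemma[OF assms(1)])
    fix L perm tau alpha
    show "adopted_final Q SA SB L perm tau alpha IA \<subseteq> adopted_final Q TA SB L perm tau alpha IA"
      using q s pw_plus[of Q SA TA SB SB] pw_minus_A[of Q SA TA] by blast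
  qed
next
  fix SA SB TB :: "'v set"
  assume q: "gap_Qplus Q" and s: "SA \<subseteq> V \<and> SB \<subseteq> TB \<and> TB \<subseteq> V"
  show "sigma_A V E p Q SA SB \<le> sigma_A V E p Q SA TB"
    by (rule AF_mono_lemma[OF assms(1)]) (use q s pw_plus[of Q SA SA SB TB] in blast)
next
  fix SA SB TB :: "'v set"
  assume q: "gap_Qminus Q" and s: "SA \<subseteq> V \<and> SB \<subseteq> TB \<and> TB \<subseteq> V"
  show "sigma_A V E p Q SA TB \<le> sigma_A V E p Q SA SB"
    by (rule AF_mono_lemma[OF assms(1)]) (use q s pw_minus_B[of Q SB TB] in blast)
qed

end
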